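(* Let $q\in\mathrm{prob}(\{0,1\}^2)$. Then $\{(\pi,\chi^{(1)}):(\pi,\chi)\in\Theta_2,\ \mu_2(\pi,\chi)=q\}=\{\theta\in\Theta_1:\mu_1(\theta)=q_{\cdot+}\}$ and $\{(\pi,\chi^{(2)}):(\pi,\chi)\in\Theta_2,\ \mu_2(\pi,\chi)=q\}=\{\theta\in\Theta_1:\mu_1(\theta)=q_{+\cdot}\}$, where $q_{\cdot+}\in\mathrm{prob}(\{0,1\})$ is $\iota\mapsto q_{\iota0}+q_{\iota1}$ and $q_{+\cdot}$ is $\iota\mapsto q_{0\iota}+q_{1\iota}$.
   Context: For a finite set $\mathcal{X}$, $\mathrm{prob}(\mathcal{X})$ is the set of probability densities on $\mathcal{X}$; $\mathrm{markov}(\mathcal{X},\mathcal{Y})$ the set of maps $(x,y)\mapsto p_{y|x}$ with $p_{\cdot|x}\in\mathrm{prob}(\mathcal{Y})$ for all $x$. For $d\in\{1,2\}$ let $\Theta_d:=\mathrm{prob}(\{0,1\})\times\mathrm{markov}(\{0,1\},\{0,1\}^d)$ and $\mu_d(\pi,\chi)_j:=\sum_{i=0}^1\pi_i\chi_{j|i}$ for $j\in\{0,1\}^d$. For $(\pi,\chi)\in\Theta_2$ and $i,\iota\in\{0,1\}$, $\chi^{(1)}_{\iota|i}:=\chi_{\iota0|i}+\chi_{\iota1|i}$ and $\chi^{(2)}_{\iota|i}:=\chi_{0\iota|i}+\chi_{1\iota|i}$, so $\chi^{(1)},\chi^{(2)}\in\mathrm{markov}(\{0,1\},\{0,1\})$.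 *)

theory Defs
  imports Complex_Main
begin

text \<open>The binary alphabet {0,1} is modelled by bool (False = 0, True = 1);
  {0,1}^2 by bool \<times> bool, the pair (a,b) standing for the word ab.\<close>

definition prob :: "('a::finite \<Rightarrow> real) set" where
  "prob = {p. (\<forall>x. 0 \<le> p x) \<and> (\<Sum>x\<in>UNIV. p x) = 1}"

text \<open>markov: chi x y = p_{y|x}.\<close>
definition markov :: "('a::finite \<Rightarrow> 'b::finite \<Rightarrow> real) set" where
  "markov = {chi. \<forall>x. chi x \<in> prob}"

definition Theta1 :: "((bool \<Rightarrow> real) \<times> (bool \<Rightarrow> bool \<Rightarrow> real)) set" where
  "Theta1 = prob \<times> markov"

definition Theta2 :: "((bool \<Rightarrow> real) \<times> (bool \<Rightarrow> bool \<times> bool \<Rightarrow> real)) set" where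
  "Theta2 = prob \<times> markov"

definition mu1 :: "(bool \<Rightarrow> real) \<times> (bool \<Rightarrow> bool \<Rightarrow> real) \<Rightarrow> bool \<Rightarrow> real" where
  "mu1 \<theta> j = (\<Sum>i\<in>UNIV. fst \<theta> i * snd \<theta> i j)"

definition mu2 :: "(bool \<Rightarrow> real) \<times> (bool \<Rightarrow> bool \<times> bool \<Rightarrow> real) \<Rightarrow> bool \<times> bool \<Rightarrow> real" where
  "mu2 \<theta> j = (\<Sum>i\<in>UNIV. fst \<theta> i * snd \<theta> i j)"

definition chi1 :: "(bool \<Rightarrow> bool \<times> bool \<Rightarrow> real) \<Rightarrow> bool \<Rightarrow> bool \<Rightarrow> real" where
  "chi1 chi i \<iota> = chi i (\<iota>, False) + chi i (\<iota>, True)"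

definition chi2 :: "(bool \<Rightarrow> bool \<times> bool \<Rightarrow> real) \<Rightarrow> bool \<Rightarrow> bool \<Rightarrow> real" where
  "chi2 chi i \<iota> = chi i (False, \<iota>) + chi i (True, \<iota>)"

definition marg1 :: "(bool \<times> bool \<Rightarrow> real) \<Rightarrow> bool \<Rightarrow> real" where
  "marg1 q \<iota> = q (\<iota>, False) + q (\<iota>, True)"

definition marg2 :: "(bool \<times> bool \<Rightarrow> real) \<Rightarrow> bool \<Rightarrow> real" where
  "marg2 q \<iota> = q (False, \<iota>) + q (True, \<iota>)"

end

theory Submission
  imports Defs
begin

lemma UNIV_bb: "(UNIV :: (bool \<times> bool) set) = {(False,False),(False,True),(True,False),(True,True)}"
  by auto

lemma sum_bb: "(\<Sum>x\<in>UNIV. f x) = f (False,False) + f (False,True) + f (True,False) + f (True,True)"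
  for f :: "bool \<times> bool \<Rightarrow> real"
  by (simp add: UNIV_bb)

lemma sum_b: "(\<Sum>x\<in>UNIV. f x) = f False + f True" for f :: "bool \<Rightarrow> real"
  by (simp add: UNIV_bool)

lemma probq: assumes "q \<in> prob" shows "\<And>x. q x \<ge> 0"
  "q (False,False) + q (False,True) + q (True,False) + q (True,True) = 1"
  using assms by (auto simp: prob_def sum_bb)

lemma part1:
  fixes q :: "bool \<times> bool \<Rightarrow> real"
  assumes q: "q \<in> prob"
  shows "{(\<pi>, chi1 \<chi>) | \<pi> \<chi>. (\<pi>, \<chi>) \<in> Theta2 \<and> mu2 (\<pi>, \<chi>) = q}
           = {\<theta> \<in> Theta1. mu1 \<theta> = marg1 q}"
proof (rule set_eqI, rule iffI)
  fix t assume "t \<in> {(\<pi>, chi1 \<chi>) | \<pi> \<chi>. (\<pi>, \<chi>) \<in> Theta2 \<and> mu2 (\<pi>, \<chi>) = q}"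
  then obtain \<pi> \<chi> where t: "t = (\<pi>, chi1 \<chi>)" and th: "(\<pi>, \<chi>) \<in> Theta2" and m: "mu2 (\<pi>, \<chi>) = q"
    by blast
  have m': "\<And>j. q j = \<pi> False * \<chi> False j + \<pi> True * \<chi> True j"
    using m by (auto simp: mu2_def sum_b)
  have "chi1 \<chi> \<in> markov" using th
    by (auto simp: Theta2_def markov_def prob_def chi1_def sum_b sum_bb add_nonneg_nonneg algebra_simps)
  moreover have "mu1 (\<pi>, chi1 \<chi>) = marg1 q"
    by (rule ext) (simp add: mu1_def marg1_def chi1_def sum_b m' algebra_simps)
  ultimately show "t \<in> {\<theta> \<in> Theta1. mu1 \<theta> = marg1 q}" using th t by (auto simp: Theta1_def Theta2_def)
next
  fix t assume "t \<in> {\<theta> \<in> Theta1. mu1 \<theta> = marg1 q}"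
  then obtain \<pi> \<kappa> where t: "t = (\<pi>, \<kappa>)" and pp: "\<pi> \<in> prob" and kk: "\<kappa> \<in> markov"
    and m: "mu1 (\<pi>,\<kappa>) = marg1 q" by (cases t) (auto simp: Theta1_def)
  have kn: "\<And>i j. \<kappa> i j \<ge> 0" and ks: "\<And>i. \<kappa> i False + \<kappa> i True = 1"
    using kk by (auto simp: markov_def prob_def sum_b)
  have pn: "\<And>i. \<pi> i \<ge> 0" using pp by (auto simp: prob_def)
  have m': "\<And>a. \<pi> False * \<kappa> False a + \<pi> True * \<kappa> True a = q (a,False) + q (a,True)"
    using m by (auto simp: mu1_def marg1_def sum_b dest: fun_cong)
  have qn: "\<And>x. q x \<ge> 0" using probq[OF q] by auto
  define M where "M a = q (a,False) + q (a,True)" for a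
  define \<chi> where "\<chi> i x = (if M (fst x) = 0 then \<kappa> i (fst x) / 2 else \<kappa> i (fst x) * q x / M (fst x))" for i x
  have Mp: "M a \<ge> 0" for a using qn by (simp add: M_def add_nonneg_nonneg)
  have Mz: "M a = 0 \<Longrightarrow> q (a,b) = 0" for a b using qn[of "(a,False)"] qn[of "(a,True)"]
    by (cases b) (auto simp: M_def)
  have c1: "chi1 \<chi> i a = \<kappa> i a" for i a
  proof (cases "M a = 0")
    case True then show ?thesis by (simp add: chi1_def \<chi>_def)
  next
    case False
    have "chi1 \<chi> i a = \<kappa> i a * (q (a,False) + q (a,True)) / M a"
      using False by (simp add: chi1_def \<chi>_def add_divide_distrib distrib_left)
    then show ?thesis using False by (simp add: M_def)
  qed
  have chm: "\<chi> \<in> markov"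
  proof -
    have "\<chi> i x \<ge> 0" for i x using kn qn Mp by (simp add: \<chi>_def)
    moreover have "(\<Sum>x\<in>UNIV. \<chi> i x) = 1" for i
    proof -
      have "(\<Sum>x\<in>UNIV. \<chi> i x) = chi1 \<chi> i False + chi1 \<chi> i True"
        by (simp add: sum_bb chi1_def)
      then show ?thesis using c1 ks by simp
    qed
    ultimately show ?thesis by (auto simp: markov_def prob_def)
  qed
  have mu: "mu2 (\<pi>, \<chi>) = q"
  proof (rule ext)
    fix x :: "bool \<times> bool"
    obtain a b where x: "x = (a,b)" by (cases x)
    show "mu2 (\<pi>, \<chi>) x = q x"
    proof (cases "M a = 0")
      case True
      then have "\<pi> False * \<kappa> False a + \<pi> True * \<kappa> True a = 0" using m' by (simp add: M_def)
      then show ?thesis using True Mz[OF True, of b] x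
        by (simp add: mu2_def sum_b \<chi>_def field_simps)
    next
      case False
      have "mu2 (\<pi>, \<chi>) x = (\<pi> False * \<kappa> False a + \<pi> True * \<kappa> True a) * q x / M a"
        using False x by (simp add: mu2_def sum_b \<chi>_def field_simps)
      also have "\<dots> = q x" using m'[of a] False by (simp add: M_def)
      finally show ?thesis .
    qed
  qed
  have "chi1 \<chi> = \<kappa>" using c1 by (auto intro!: ext)
  then show "t \<in> {(\<pi>, chi1 \<chi>) | \<pi> \<chi>. (\<pi>, \<chi>) \<in> Theta2 \<and> mu2 (\<pi>, \<chi>) = q}"
    using t pp chm mu by (auto simp: Theta2_def)
qed

lemma part2:
  fixes q :: "bool \<times> bool \<Rightarrow> real"
  assumes q: "q \<in> prob"
  shows "{(\<pi>, chi2 \<chi>) | \<pi> \<chi>. (\<pi>, \<chi>) \<in> Theta2 \<and> mu2 (\<pi>, \<chi>) = q}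
           = {\<theta> \<in> Theta1. mu1 \<theta> = marg2 q}"
proof (rule set_eqI, rule iffI)
  fix t assume "t \<in> {(\<pi>, chi2 \<chi>) | \<pi> \<chi>. (\<pi>, \<chi>) \<in> Theta2 \<and> mu2 (\<pi>, \<chi>) = q}"
  then obtain \<pi> \<chi> where t: "t = (\<pi>, chi2 \<chi>)" and th: "(\<pi>, \<chi>) \<in> Theta2" and m: "mu2 (\<pi>, \<chi>) = q"
    by blast
  have m': "\<And>j. q j = \<pi> False * \<chi> False j + \<pi> True * \<chi> True j"
    using m by (auto simp: mu2_def sum_b)
  have "chi2 \<chi> \<in> markov" using th
    by (auto simp: Theta2_def markov_def prob_def chi2_def sum_b sum_bb add_nonneg_nonneg algebra_simps)
  moreover have "mu1 (\<pi>, chi2 \<chi>) = marg2 q"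
    by (rule ext) (simp add: mu1_def marg2_def chi2_def sum_b m' algebra_simps)
  ultimately show "t \<in> {\<theta> \<in> Theta1. mu1 \<theta> = marg2 q}" using th t by (auto simp: Theta1_def Theta2_def)
next
  fix t assume "t \<in> {\<theta> \<in> Theta1. mu1 \<theta> = marg2 q}"
  then obtain \<pi> \<kappa> where t: "t = (\<pi>, \<kappa>)" and pp: "\<pi> \<in> prob" and kk: "\<kappa> \<in> markov"
    and m: "mu1 (\<pi>,\<kappa>) = marg2 q" by (cases t) (auto simp: Theta1_def)
  have kn: "\<And>i j. \<kappa> i j \<ge> 0" and ks: "\<And>i. \<kappa> i False + \<kappa> i True = 1"
    using kk by (auto simp: markov_def prob_def sum_b)
  have m': "\<And>a. \<pi> False * \<kappa> False a + \<pi> True * \<kappa> True a = q (False,a) + q (True,a)"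
    using m by (auto simp: mu1_def marg2_def sum_b dest: fun_cong)
  have qn: "\<And>x. q x \<ge> 0" using probq[OF q] by auto
  define M where "M a = q (False,a) + q (True,a)" for a
  define \<chi> where "\<chi> i x = (if M (snd x) = 0 then \<kappa> i (snd x) / 2 else \<kappa> i (snd x) * q x / M (snd x))" for i x
  have Mp: "M a \<ge> 0" for a using qn by (simp add: M_def add_nonneg_nonneg)
  have Mz: "M a = 0 \<Longrightarrow> q (b,a) = 0" for a b using qn[of "(False,a)"] qn[of "(True,a)"]
    by (cases b) (auto simp: M_def)
  have c1: "chi2 \<chi> i a = \<kappa> i a" for i a
  proof (cases "M a = 0")
    case True then show ?thesis by (simp add: chi2_def \<chi>_def)
  next
    case False
    have "chi2 \<chi> i a = \<kappa> i a * (q (False,a) + q (True,a)) / M a"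
      using False by (simp add: chi2_def \<chi>_def add_divide_distrib distrib_left)
    then show ?thesis using False by (simp add: M_def)
  qed
  have chm: "\<chi> \<in> markov"
  proof -
    have "\<chi> i x \<ge> 0" for i x using kn qn Mp by (simp add: \<chi>_def)
    moreover have "(\<Sum>x\<in>UNIV. \<chi> i x) = 1" for i
    proof -
      have "(\<Sum>x\<in>UNIV. \<chi> i x) = chi2 \<chi> i False + chi2 \<chi> i True"
        by (simp add: sum_bb chi2_def)
      then show ?thesis using c1 ks by simp
    qed
    ultimately show ?thesis by (auto simp: markov_def prob_def)
  qed
  have mu: "mu2 (\<pi>, \<chi>) = q"
  proof (rule ext)
    fix x :: "bool \<times> bool"
    obtain a b where x: "x = (b,a)" by (cases x)
    show "mu2 (\<pi>, \<chi>) x = q x"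
    proof (cases "M a = 0")
      case True
      then have "\<pi> False * \<kappa> False a + \<pi> True * \<kappa> True a = 0" using m' by (simp add: M_def)
      then show ?thesis using True Mz[OF True, of b] x
        by (simp add: mu2_def sum_b \<chi>_def field_simps)
    next
      case False
      have "mu2 (\<pi>, \<chi>) x = (\<pi> False * \<kappa> False a + \<pi> True * \<kappa> True a) * q x / M a"
        using False x by (simp add: mu2_def sum_b \<chi>_def field_simps)
      also have "\<dots> = q x" using m'[of a] False by (simp add: M_def)
      finally show ?thesis .
    qed
  qed
  have "chi2 \<chi> = \<kappa>" using c1 by (auto intro!: ext)
  then show "t \<in> {(\<pi>, chi2 \<chi>) | \<pi> \<chi>. (\<pi>, \<chi>) \<in> Theta2 \<and> mu2 (\<pi>, \<chi>) = q}"
    using t pp chm mu by (auto simp: Theta2_def)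
qed

theorem lemma2:
  fixes q :: "bool \<times> bool \<Rightarrow> real"
  assumes "q \<in> prob"
  shows "({(\<pi>, chi1 \<chi>) | \<pi> \<chi>. (\<pi>, \<chi>) \<in> Theta2 \<and> mu2 (\<pi>, \<chi>) = q}
           = {\<theta> \<in> Theta1. mu1 \<theta> = marg1 q}) \<and>
         ({(\<pi>, chi2 \<chi>) | \<pi> \<chi>. (\<pi>, \<chi>) \<in> Theta2 \<and> mu2 (\<pi>, \<chi>) = q}
           = {\<theta> \<in> Theta1. mu1 \<theta> = marg2 q})"
  using part1[OF assms] part2[OF assms] by blast

end
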